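(* For any linear graph-based classifier $h$ and any $n$ users with features in $\mathbb{R}^\ell$ and nonnegative embedding weights, the myopic best-response dynamics described below converge (i.e., reach a round after which no user's features change), and they do so after at most $n$ rounds.
   Context: Embeddings: $\phi(x_i;x_{-i})=\widetilde{w}_{ii}x_i+\sum_{j\neq i}\widetilde{w}_{ji}x_j$ with $\widetilde{w}_{ji}\ge0$. Classifier: $h_{\theta,b}(x_i;x_{-i})=\mathrm{sign}(\theta^\top\phi(x_i;x_{-i})+b)\in\{\pm1\}$, $\mathrm{sign}(0)=+1$. Cost: $c(x,x')=\|x-x'\|_2$. Dynamics: $x_i^{(0)}=x_i$; at each round all users update concurrently by $x_i^{(t+1)}=\arg\max_{x'} h(x';x_{-i}^{(t)})-c(x_i^{(t)},x')-\kappa_i^{(t)}$ with accumulated costs $\kappa_i^{(t)}$; concretely, user $i$ changes her features in a round only if she is currently classified $-1$ and some $x'$ with $h(x';x^{(t)}_{-i})=+1$ has $c(x_i^{(t)},x')\le2$, in which case she moves to the minimum-cost such point (embedding exactly on the boundary $\theta^\top\phi+b=0$); otherwise she stays. *)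

theory Defs
  imports "HOL-Analysis.Analysis"
begin

text \<open>Users are indexed by 0..n-1; features of user i are x i :: real^'l.
  W j i is the embedding weight w~_{ji}.\<close>

definition embed :: "(nat \<Rightarrow> nat \<Rightarrow> real) \<Rightarrow> nat \<Rightarrow> (nat \<Rightarrow> real^'l) \<Rightarrow> nat \<Rightarrow> real^'l" where
  "embed W n x i = W i i *\<^sub>R x i + (\<Sum>j\<in>{..<n} - {i}. W j i *\<^sub>R x j)"

definition classify :: "real^'l \<Rightarrow> real \<Rightarrow> (nat \<Rightarrow> nat \<Rightarrow> real) \<Rightarrow> nat \<Rightarrow> (nat \<Rightarrow> real^'l) \<Rightarrow> nat \<Rightarrow> int" where
  "classify \<theta> b W n x i = (if \<theta> \<bullet> embed W n x i + b \<ge> 0 then 1 else -1)"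

definition pos_set :: "real^'l \<Rightarrow> real \<Rightarrow> (nat \<Rightarrow> nat \<Rightarrow> real) \<Rightarrow> nat \<Rightarrow> (nat \<Rightarrow> real^'l) \<Rightarrow> nat \<Rightarrow> (real^'l) set" where
  "pos_set \<theta> b W n x i = {x'. classify \<theta> b W n (x(i := x')) i = 1}"

definition br_step :: "real^'l \<Rightarrow> real \<Rightarrow> (nat \<Rightarrow> nat \<Rightarrow> real) \<Rightarrow> nat \<Rightarrow> (nat \<Rightarrow> real^'l) \<Rightarrow> (nat \<Rightarrow> real^'l) \<Rightarrow> bool" where
  "br_step \<theta> b W n x y \<longleftrightarrow>
     (\<forall>i<n.
        (if classify \<theta> b W n x i = -1 \<and> (\<exists>x'\<in>pos_set \<theta> b W n x i. dist (x i) x' \<le> 2)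
         then y i \<in> pos_set \<theta> b W n x i \<and>
              (\<forall>z\<in>pos_set \<theta> b W n x i. dist (x i) (y i) \<le> dist (x i) z)
         else y i = x i))"

end

theory Submission
  imports Defs
begin

lemma inner_embed:
  "\<theta> \<bullet> embed W n x i = W i i * (\<theta> \<bullet> x i) + (\<Sum>j\<in>{..<n} - {i}. W j i * (\<theta> \<bullet> x j))"
  unfolding embed_def by (simp add: inner_add_right inner_sum_right)

lemma embed_mono:
  assumes "i < n" "\<And>i j. i < n \<Longrightarrow> j < n \<Longrightarrow> W j i \<ge> (0::real)"
    and "\<And>j. j < n \<Longrightarrow> \<theta> \<bullet> x j \<le> \<theta> \<bullet> y j"
  shows "\<theta> \<bullet> embed W n x i \<le> \<theta> \<bullet> embed W n y i"
  unfolding inner_embed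
proof (rule add_mono)
  show "W i i * (\<theta> \<bullet> x i) \<le> W i i * (\<theta> \<bullet> y i)"
    using assms by (intro mult_left_mono) auto
  show "(\<Sum>j\<in>{..<n} - {i}. W j i * (\<theta> \<bullet> x j)) \<le> (\<Sum>j\<in>{..<n} - {i}. W j i * (\<theta> \<bullet> y j))"
    using assms by (intro sum_mono mult_left_mono) auto
qed

lemma embed_cong:
  assumes "\<And>j. j < n \<Longrightarrow> x j = y j" "i < n"
  shows "embed W n x i = embed W n y i"
proof -
  have "i < n \<Longrightarrow> x i = y i" using assms by auto
  show ?thesis unfolding embed_def
    using assms by (cases "i < n") (auto intro!: sum.cong)
qed

lemma embed_upd:
  "embed W n (x(i := z)) i = W i i *\<^sub>R z + (\<Sum>j\<in>{..<n} - {i}. W j i *\<^sub>R x j)"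
  unfolding embed_def by (auto intro!: sum.cong)

theorem corollary1:
  fixes \<theta> :: "real^'l" and b :: real and W :: "nat \<Rightarrow> nat \<Rightarrow> real" and n :: nat
    and X :: "nat \<Rightarrow> nat \<Rightarrow> real^'l"
  assumes nonneg: "\<And>i j. i < n \<Longrightarrow> j < n \<Longrightarrow> W j i \<ge> 0"
    and dyn: "\<And>t. br_step \<theta> b W n (X t) (X (Suc t))"
  shows "\<exists>T\<le>n. \<forall>t\<ge>T. \<forall>i<n. X t i = X T i"
proof -
  define C where "C t i \<longleftrightarrow> classify \<theta> b W n (X t) i = -1 \<and>
      (\<exists>x'\<in>pos_set \<theta> b W n (X t) i. dist (X t i) x' \<le> 2)" for t i
  have step_true: "X (Suc t) i \<in> pos_set \<theta> b W n (X t) i" if "i < n" "C t i" for t i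
    using dyn[of t] that unfolding br_step_def C_def by auto
  have step_false: "X (Suc t) i = X t i" if "i < n" "\<not> C t i" for t i
    using dyn[of t] that unfolding br_step_def C_def by auto
  have C_neg: "classify \<theta> b W n (X t) i = -1" if "C t i" for t i
    using that C_def by auto
  have C_moves: "X (Suc t) i \<noteq> X t i" if "i < n" "C t i" for t i
  proof
    assume eq: "X (Suc t) i = X t i"
    have "classify \<theta> b W n ((X t)(i := X (Suc t) i)) i = 1"
      using step_true[OF that] unfolding pos_set_def by auto
    then have "classify \<theta> b W n (X t) i = 1" using eq by simp
    with C_neg[OF that(2)] show False by simp
  qed
  have moved_C: "C t i" if "i < n" "X (Suc t) i \<noteq> X t i" for t i
    using step_false that by blast
  have incr: "\<theta> \<bullet> X t i \<le> \<theta> \<bullet> X (Suc t) i" if "i < n" for t i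
  proof (cases "C t i")
    case True
    let ?S = "(\<Sum>j\<in>{..<n} - {i}. W j i * (\<theta> \<bullet> X t j))"
    have "classify \<theta> b W n ((X t)(i := X (Suc t) i)) i = 1"
      using step_true[OF that True] unfolding pos_set_def by auto
    then have h1: "W i i * (\<theta> \<bullet> X (Suc t) i) + ?S + b \<ge> 0"
      unfolding classify_def embed_upd
      by (auto simp: inner_add_right inner_sum_right split: if_splits)
    have h2: "W i i * (\<theta> \<bullet> X t i) + ?S + b < 0"
      using C_neg[OF True] unfolding classify_def inner_embed by (auto split: if_splits)
    have "W i i * (\<theta> \<bullet> X t i) < W i i * (\<theta> \<bullet> X (Suc t) i)" using h1 h2 by linarith
    moreover have "W i i \<ge> 0" using nonneg that by auto
    ultimately show ?thesis
      by (metis less_eq_real_def mult_left_mono not_le)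
  next
    case False then show ?thesis using step_false that by simp
  qed
  have pos_stay: "classify \<theta> b W n (X (Suc t)) i = 1" if "i < n" "classify \<theta> b W n (X t) i = 1" for t i
  proof -
    have "\<theta> \<bullet> embed W n (X t) i \<le> \<theta> \<bullet> embed W n (X (Suc t)) i"
      by (rule embed_mono[OF that(1)]) (auto intro: nonneg incr)
    then show ?thesis using that(2) unfolding classify_def by (auto split: if_splits)
  qed
  have pos_forever: "classify \<theta> b W n (X (t + k)) i = 1" if "i < n" "classify \<theta> b W n (X t) i = 1" for t k i
    using that by (induction k) (auto intro: pos_stay)
  have moved_pos: "classify \<theta> b W n (X (Suc t)) i = 1" if "i < n" "X (Suc t) i \<noteq> X t i" for t i
  proof -
    have Ct: "C t i" using moved_C that by blast
    have "classify \<theta> b W n ((X t)(i := X (Suc t) i)) i = 1"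
      using step_true[OF that(1) Ct] unfolding pos_set_def by auto
    moreover have "\<theta> \<bullet> embed W n ((X t)(i := X (Suc t) i)) i \<le> \<theta> \<bullet> embed W n (X (Suc t)) i"
      by (rule embed_mono[OF that(1)]) (auto intro: nonneg incr)
    ultimately show ?thesis unfolding classify_def by (auto split: if_splits)
  qed
  have once: "X (Suc s) i = X s i" if "i < n" "X (Suc t) i \<noteq> X t i" "t < s" for s t i
  proof (rule ccontr)
    assume "X (Suc s) i \<noteq> X s i"
    then have "C s i" using moved_C that by blast
    then have "classify \<theta> b W n (X s) i = -1" by (rule C_neg)
    moreover have "s = Suc t + (s - Suc t)" using that by simp
    then have "classify \<theta> b W n (X s) i = 1"
      using pos_forever[OF that(1) moved_pos[OF that(1,2)]] by metis
    ultimately show False by simp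
  qed
  have stat_next: "\<forall>i<n. X (Suc (Suc t)) i = X (Suc t) i" if st: "\<forall>i<n. X (Suc t) i = X t i" for t
  proof (intro allI impI)
    fix i assume i: "i < n"
    have e: "embed W n ((X (Suc t))(i := z)) i = embed W n ((X t)(i := z)) i" for z
      by (rule embed_cong) (use st i in auto)
    have e0: "embed W n (X (Suc t)) i = embed W n (X t) i"
      by (rule embed_cong) (use st i in auto)
    have "C (Suc t) i = C t i"
      unfolding C_def classify_def pos_set_def
      using e0 st i by (simp add: e)
    moreover have "\<not> C t i" using C_moves st i by blast
    ultimately show "X (Suc (Suc t)) i = X (Suc t) i" using step_false i by simp
  qed
  have stat_forever: "\<forall>i<n. X (t + k) i = X t i" if "\<forall>i<n. X (Suc t) i = X t i" for t k
  proof -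
    have "(\<forall>i<n. X (Suc (t + k)) i = X (t + k) i) \<and> (\<forall>i<n. X (t + k) i = X t i)"
    proof (induction k)
      case 0 then show ?case using that by simp
    next
      case (Suc k) then show ?case using stat_next by simp
    qed
    then show ?thesis by blast
  qed
  have "\<exists>T\<le>n. \<forall>i<n. X (Suc T) i = X T i"
  proof (rule ccontr)
    assume "\<not> ?thesis"
    then have "\<forall>T\<in>{..n}. \<exists>i. i < n \<and> X (Suc T) i \<noteq> X T i" by auto
    then obtain m where m: "\<And>T. T \<in> {..n} \<Longrightarrow> m T < n \<and> X (Suc T) (m T) \<noteq> X T (m T)"
      by metis
    have "inj_on m {..n}"
    proof (rule inj_onI)
      fix s t assume s: "s \<in> {..n}" and t: "t \<in> {..n}" and eq: "m s = m t"
      show "s = t"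
      proof (rule ccontr)
        assume "s \<noteq> t"
        then consider "s < t" | "t < s" by linarith
        then show False
        proof cases
          case 1 then show ?thesis using once[of "m s" s t] m[OF s] m[OF t] eq by auto
        next
          case 2 then show ?thesis using once[of "m t" t s] m[OF s] m[OF t] eq by auto
        qed
      qed
    qed
    moreover have "m ` {..n} \<subseteq> {..<n}" using m by auto
    ultimately have "card {..n} \<le> card {..<n}"
      by (metis card_inj_on_le finite_lessThan)
    then show False by simp
  qed
  then obtain T where T: "T \<le> n" "\<forall>i<n. X (Suc T) i = X T i" by blast
  show ?thesis
  proof (intro exI[of _ T] conjI allI impI)
    fix t i assume "T \<le> t" "i < n"
    then show "X t i = X T i" using stat_forever[OF T(2), of "t - T"] by simp
  qed (use T in auto)
qed

end
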